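(* Let $H$ be a Hermitian operator on a finite-dimensional Hilbert space $\mathcal{H}$ with ground-state space $g.s.(H)$. Suppose there exist a pure state $|\psi_g\rangle\in g.s.(H)$ and a finite group $\mathcal{G}=\{G_1,\dots,G_{|\mathcal{G}|}\}$ of unitary operators on $\mathcal{H}$ with $G_k|\psi_g\rangle=|\psi_g\rangle$ for all $k$. Let $\overline{H}=\frac{1}{|\mathcal{G}|}\sum_{k=1}^{|\mathcal{G}|}G_k^\dagger HG_k$. Then $g.s.(\overline{H})\subseteq g.s.(H)$.
   Context: The ground-state space $g.s.(H)$ of a Hermitian operator $H$ is the eigenspace of $H$ associated with its smallest eigenvalue. *)

theory Defs
  imports "HOL-Analysis.Analysis"
begin

definition adj :: "complex^'n^'m \<Rightarrow> complex^'m^'n" where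
  "adj A = (\<chi> i j. cnj (A $ j $ i))"

definition hermitian :: "complex^'n^'n \<Rightarrow> bool" where
  "hermitian A \<longleftrightarrow> adj A = A"

definition unitary_op :: "complex^'n^'n \<Rightarrow> bool" where
  "unitary_op U \<longleftrightarrow> adj U ** U = mat 1 \<and> U ** adj U = mat 1"

definition is_eigenvalue :: "complex^'n^'n \<Rightarrow> complex \<Rightarrow> bool" where
  "is_eigenvalue A e \<longleftrightarrow> (\<exists>v. v \<noteq> 0 \<and> A *v v = e *s v)"

text \<open>Smallest eigenvalue (eigenvalues of Hermitian operators are real).\<close>
definition ground_energy :: "complex^'n^'n \<Rightarrow> real" where
  "ground_energy A = Min (Re ` {e. is_eigenvalue A e})"

definition gs :: "complex^'n^'n \<Rightarrow> (complex^'n) set" where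
  "gs A = {v. A *v v = complex_of_real (ground_energy A) *s v}"

end

theory Submission
  imports Defs
begin

lemma cinner_eq: "(a::complex) \<bullet> b = Re (cnj a * b)"
  by (simp add: inner_complex_def)

definition cin :: "complex^'n \<Rightarrow> complex^'n \<Rightarrow> complex" where
  "cin x y = (\<Sum>i\<in>UNIV. cnj (x$i) * y$i)"

lemma inner_cin: "x \<bullet> y = Re (cin x y)"
  unfolding inner_vec_def cin_def Re_sum by (simp add: inner_complex_def)

lemma adj_cin: "cin x (A *v y) = cin (adj A *v x) y"
proof -
  have "cin x (A *v y) = (\<Sum>i\<in>UNIV. \<Sum>j\<in>UNIV. cnj (x$i) * A$i$j * y$j)"
    by (simp add: cin_def matrix_vector_mult_def sum_distrib_left mult.assoc)
  also have "\<dots> = (\<Sum>j\<in>UNIV. \<Sum>i\<in>UNIV. cnj (x$i) * A$i$j * y$j)"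
    by (rule sum.swap)
  also have "\<dots> = cin (adj A *v x) y"
    by (simp add: cin_def matrix_vector_mult_def adj_def sum_distrib_right sum_distrib_left mult_ac)
  finally show ?thesis .
qed

lemma adj_inner: "x \<bullet> (A *v y) = (adj A *v x) \<bullet> (y::complex^'n)"
  by (simp add: inner_cin adj_cin)

lemma adj_adj: "adj (adj A) = A"
  by (simp add: adj_def vec_eq_iff)

lemma adj_inner': "(A *v x) \<bullet> (y::complex^'n) = x \<bullet> (adj A *v y)"
  using adj_inner[of x "adj A" y] by (simp add: adj_adj inner_commute)

definition sa :: "complex^'n^'n \<Rightarrow> bool" where
  "sa A \<longleftrightarrow> (\<forall>x y. x \<bullet> (A *v y) = (A *v x) \<bullet> y)"

lemma hermitian_sa: "hermitian A \<Longrightarrow> sa A"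
  unfolding sa_def hermitian_def using adj_inner by metis

lemma ofreal_smult: "(complex_of_real r) *s (v::complex^'n) = r *\<^sub>R v"
  apply (simp add: vec_eq_iff)
  by (simp add: scaleR_conv_of_real)

lemma cin_smult: "cin ((a::complex) *s v) ((b::complex) *s w) = cnj a * b * cin v w"
  by (simp add: cin_def sum_distrib_left mult_ac)

lemma cin_self: "cin v v = of_real (v \<bullet> v)"
proof -
  have "cin v v = (\<Sum>i\<in>UNIV. of_real ((Re (v$i))\<^sup>2 + (Im (v$i))\<^sup>2))"
    unfolding cin_def by (rule sum.cong) (simp_all only: mult.commute[of "cnj _"] complex_mult_cnj)
  also have "\<dots> = of_real (v \<bullet> v)"
    by (simp add: inner_vec_def inner_complex_def power2_eq_square)
  finally show ?thesis .
qed

lemma smult_inner_same: "((a::complex) *s v) \<bullet> ((b::complex) *s (v::complex^'n)) = Re (cnj a * b) * (v \<bullet> v)"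
proof -
  have "((a::complex) *s v) \<bullet> (b *s v) = Re (cin (a *s v) (b *s v))" by (rule inner_cin)
  also have "\<dots> = Re (cnj a * b * of_real (v \<bullet> v))"
    by (simp only: cin_smult cin_self)
  also have "\<dots> = Re (cnj a * b) * (v \<bullet> v)" by simp
  finally show ?thesis .
qed

lemma mv_linear: "linear (\<lambda>x::complex^'n. H *v x)"
  by (rule linearI) (simp_all add: matrix_vector_right_distrib ofreal_smult[symmetric] vector_scalar_commute)

lemma smult_one: "(1::complex) *s (v::complex^'n) = v"
  by (simp add: vec_eq_iff)

lemma inner_smult_right: "(v::complex^'n) \<bullet> ((e::complex) *s v) = Re e * (v \<bullet> v)"
  using smult_inner_same[of 1 v e] by (simp add: smult_one)

lemma eig_real:
  assumes "sa H" "H *v v = e *s v" "v \<noteq> 0"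
  shows "Im e = 0"
proof -
  have "(\<i> *s v) \<bullet> (H *v v) = (H *v (\<i> *s v)) \<bullet> v"
    using assms(1) unfolding sa_def by blast
  also have "H *v (\<i> *s v) = (\<i> * e) *s v"
    by (simp add: vector_scalar_commute assms(2) vector_smult_assoc)
  finally have "(\<i> *s v) \<bullet> (e *s v) = ((\<i> * e) *s v) \<bullet> (1 *s v)"
    by (simp add: assms(2) smult_one)
  moreover have "(\<i> *s v) \<bullet> (e *s v) = Im e * (v \<bullet> v)"
    using smult_inner_same[of \<i> v e] by simp
  moreover have "((\<i> * e) *s v) \<bullet> (1 *s v) = - Im e * (v \<bullet> v)"
    using smult_inner_same[of "\<i> * e" v 1] by simp
  ultimately have "Im e * (v \<bullet> v) = - Im e * (v \<bullet> v)" by simp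
  moreover have "v \<bullet> v > 0" using assms(3) by simp
  ultimately show ?thesis by simp
qed

lemma eig_ofreal:
  assumes "sa H" "H *v v = e *s v" "v \<noteq> 0"
  shows "H *v v = Re e *\<^sub>R v"
proof -
  have "e = of_real (Re e)" using eig_real[OF assms] by (simp add: complex_eq_iff)
  then show ?thesis using assms(2) ofreal_smult by metis
qed

lemma eig_orth:
  assumes "sa H" "H *v v1 = e1 *s v1" "v1 \<noteq> 0" "H *v v2 = e2 *s v2" "v2 \<noteq> 0" "e1 \<noteq> e2"
  shows "v1 \<bullet> v2 = 0"
proof -
  have i1: "Im e1 = 0" using eig_real assms by blast
  have i2: "Im e2 = 0" using eig_real assms by blast
  have r: "Re e1 \<noteq> Re e2" using i1 i2 assms(6) by (auto simp: complex_eq_iff)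
  have h1: "H *v v1 = Re e1 *\<^sub>R v1" using eig_ofreal assms by blast
  have h2: "H *v v2 = Re e2 *\<^sub>R v2" using eig_ofreal assms by blast
  have "v1 \<bullet> (H *v v2) = (H *v v1) \<bullet> v2" using assms(1) unfolding sa_def by blast
  then have "Re e2 * (v1 \<bullet> v2) = Re e1 * (v1 \<bullet> v2)" by (simp add: h1 h2)
  then show ?thesis using r by simp
qed

lemma eig_finite:
  assumes "sa H"
  shows "finite {e. is_eigenvalue H e}"
proof -
  define E where "E = {e. is_eigenvalue H e}"
  define f where "f e = (SOME v. v \<noteq> 0 \<and> H *v v = e *s v)" for e
  have fp: "f e \<noteq> 0 \<and> H *v f e = e *s f e" if "e \<in> E" for e
  proof -
    have "\<exists>v. v \<noteq> 0 \<and> H *v v = e *s v" using that by (simp add: E_def is_eigenvalue_def)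
    then show ?thesis unfolding f_def by (rule someI_ex)
  qed
  have inj: "inj_on f E"
  proof (rule inj_onI)
    fix a b assume a: "a \<in> E" and b: "b \<in> E" and eq: "f a = f b"
    have "a *s f a = H *v f a" using fp[OF a] by (rule sym[OF conjunct2])
    also have "\<dots> = H *v f b" using eq by (rule arg_cong)
    also have "\<dots> = b *s f b" using fp[OF b] by (rule conjunct2)
    finally have "a *s f a = b *s f a" using eq by simp
    then have "(a - b) *s f a = 0" by (simp add: vector_sub_rdistrib)
    then show "a = b" using fp[OF a] by (simp add: vector_mul_eq_0)
  qed
  have "pairwise orthogonal (f ` E)"
    unfolding pairwise_def orthogonal_def
  proof (clarify)
    fix a b assume a: "a \<in> E" and b: "b \<in> E" and ne: "f a \<noteq> f b"
    then have "a \<noteq> b" by blast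
    then show "f a \<bullet> f b = 0" using eig_orth[OF assms] fp[OF a] fp[OF b] by blast
  qed
  moreover have "0 \<notin> f ` E" using fp by auto
  ultimately have "independent (f ` E)" by (rule pairwise_orthogonal_independent)
  then have "finite (f ` E)" using independent_bound by blast
  then show ?thesis using finite_imageD inj E_def by blast
qed

lemma psd_eig:
  assumes "sa H" and bnd: "\<forall>x. c * (x \<bullet> x) \<le> x \<bullet> (H *v x)" and w: "w \<bullet> (H *v w) = c * (w \<bullet> w)"
  shows "H *v w = complex_of_real c *s w"
proof -
  define K where "K y = H *v y - c *\<^sub>R y" for y
  have Klin: "K (x + t *\<^sub>R y) = K x + t *\<^sub>R K y" for x y t
    unfolding K_def using linear_add[OF mv_linear] linear_scale[OF mv_linear]
    by (simp add: algebra_simps)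
  have Ksym: "x \<bullet> K y = y \<bullet> K x" for x y
    using assms(1) unfolding K_def sa_def by (simp add: inner_diff_right inner_commute)
  have Kpos: "0 \<le> x \<bullet> K x" for x
    using bnd unfolding K_def by (simp add: inner_diff_right)
  have Kw: "w \<bullet> K w = 0" using w unfolding K_def by (simp add: inner_diff_right)
  define y where "y = K w"
  define b where "b = y \<bullet> y"
  define d where "d = y \<bullet> K y"
  have d0: "0 \<le> d" unfolding d_def by (rule Kpos)
  have wy: "w \<bullet> K y = b" unfolding b_def y_def using Ksym by simp
  have "0 \<le> (w + t *\<^sub>R y) \<bullet> K (w + t *\<^sub>R y)" for t by (rule Kpos)
  also have "(w + t *\<^sub>R y) \<bullet> K (w + t *\<^sub>R y) = 2 * t * b + t * t * d" for t
    unfolding Klin using Kw wy Ksym[of y w] unfolding d_def y_def[symmetric]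
    by (simp add: inner_add_left inner_add_right algebra_simps)
  finally have q: "0 \<le> 2 * t * b + t * t * d" for t .
  have "b = 0"
  proof (rule ccontr)
    assume "b \<noteq> 0"
    then have bp: "b > 0" unfolding b_def by simp
    define e where "e = b / (d + 1)"
    have ep: "e > 0" unfolding e_def using bp d0 by simp
    have "0 \<le> 2 * (- e) * b + (- e) * (- e) * d" by (rule q)
    then have "0 \<le> e * (e * d - 2 * b)" by (simp add: algebra_simps)
    then have "2 * b \<le> e * d" using ep by (simp add: zero_le_mult_iff)
    moreover have "e * d \<le> b"
    proof -
      have "e * d = b * (d / (d + 1))" unfolding e_def by simp
      also have "\<dots> \<le> b * 1" using bp d0 by (intro mult_left_mono) auto
      finally show ?thesis by simp
    qed
    ultimately show False using bp by linarith
  qed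
  then have "K w = 0" unfolding b_def y_def by simp
  then show ?thesis unfolding K_def by (simp add: ofreal_smult)
qed

lemma variational:
  assumes "sa H"
  shows "\<exists>m w. w \<noteq> 0 \<and> H *v w = complex_of_real m *s w \<and> (\<forall>v. m * (v \<bullet> v) \<le> v \<bullet> (H *v v))"
proof -
  define q where "q v = v \<bullet> (H *v v)" for v
  have cont: "continuous_on (sphere 0 1) q"
    unfolding q_def
    by (intro continuous_on_inner continuous_on_id linear_continuous_on)
       (simp add: linear_conv_bounded_linear[symmetric] mv_linear)
  obtain w where w: "w \<in> sphere 0 1" and wmin: "\<forall>y\<in>sphere 0 1. q w \<le> q y"
    using continuous_attains_inf[OF compact_sphere _ cont] sphere_eq_empty[of "0::complex^_" 1] by auto
  define m where "m = q w"
  have bnd: "m * (v \<bullet> v) \<le> v \<bullet> (H *v v)" for v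
  proof (cases "v = 0")
    case True then show ?thesis by simp
  next
    case False
    define u where "u = (1 / norm v) *\<^sub>R v"
    have nv: "norm v > 0" using False by simp
    have "u \<in> sphere 0 1" unfolding u_def using nv by simp
    then have "m \<le> q u" using wmin m_def by simp
    also have "q u = (1 / norm v)^2 * (v \<bullet> (H *v v))"
      unfolding q_def u_def by (simp add: linear_scale[OF mv_linear] power2_eq_square)
    finally have "m \<le> (v \<bullet> (H *v v)) / (norm v)^2" by (simp add: power_one_over)
    then have "m * (norm v)^2 \<le> v \<bullet> (H *v v)" using nv by (simp add: pos_le_divide_eq)
    then show ?thesis by (simp add: power2_norm_eq_inner)
  qed
  have ww: "w \<bullet> w = 1" using w by (simp add: power2_norm_eq_inner[symmetric])
  have "w \<bullet> (H *v w) = m * (w \<bullet> w)" using ww unfolding m_def q_def by simp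
  then have "H *v w = complex_of_real m *s w" using psd_eig[OF assms] bnd by blast
  moreover have "w \<noteq> 0" using w by auto
  ultimately show ?thesis using bnd by blast
qed

lemma ground_char:
  assumes "sa H" and ev: "H *v w = complex_of_real m *s w" "w \<noteq> 0"
    and bnd: "\<forall>v. m * (v \<bullet> v) \<le> v \<bullet> (H *v v)"
  shows "ground_energy H = m"
  unfolding ground_energy_def
proof (rule Min_eqI)
  show "finite (Re ` {e. is_eigenvalue H e})" using eig_finite[OF assms(1)] by simp
  show "m \<in> Re ` {e. is_eigenvalue H e}"
    using ev unfolding is_eigenvalue_def by (intro image_eqI[of _ _ "complex_of_real m"]) auto
  fix y assume "y \<in> Re ` {e. is_eigenvalue H e}"
  then obtain e v where y: "y = Re e" and v: "v \<noteq> 0" "H *v v = e *s v"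
    unfolding is_eigenvalue_def by auto
  have "m * (v \<bullet> v) \<le> v \<bullet> (H *v v)" using bnd by blast
  also have "\<dots> = Re e * (v \<bullet> v)" using v by (simp add: inner_smult_right)
  finally show "m \<le> y" using v y by simp
qed

lemma ground_props:
  assumes "sa H"
  shows "(\<forall>v. ground_energy H * (v \<bullet> v) \<le> v \<bullet> (H *v v))"
    and "\<exists>w. w \<noteq> 0 \<and> H *v w = complex_of_real (ground_energy H) *s w"
proof -
  obtain m w where "w \<noteq> 0" "H *v w = complex_of_real m *s w" "\<forall>v. m * (v \<bullet> v) \<le> v \<bullet> (H *v v)"
    using variational[OF assms] by blast
  moreover then have "ground_energy H = m" using ground_char[OF assms] by blast
  ultimately show "(\<forall>v. ground_energy H * (v \<bullet> v) \<le> v \<bullet> (H *v v))"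
    and "\<exists>w. w \<noteq> 0 \<and> H *v w = complex_of_real (ground_energy H) *s w" by auto
qed

lemma mv_sum: "finite S \<Longrightarrow> (\<Sum>U\<in>S. M U) *v (x::complex^'n) = (\<Sum>U\<in>S. M U *v x)"
  apply (induction S rule: finite_induct)
   apply (simp add: vec_eq_iff matrix_vector_mult_def)
  apply (simp add: matrix_vector_mult_add_rdistrib)
  done

lemma mv_scale: "(r *\<^sub>R A) *v (x::complex^'n) = r *\<^sub>R (A *v x)"
  by (simp add: vec_eq_iff matrix_vector_mult_def scaleR_sum_right)

lemma adj_inner2: "x \<bullet> (adj A *v y) = (A *v x) \<bullet> (y::complex^'n)"
  using adj_inner[of x "adj A" y] by (simp only: adj_adj)

lemma mv_scaleR: "A *v (r *\<^sub>R x) = r *\<^sub>R (A *v (x::complex^'n))"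
  by (rule linear_scale[OF mv_linear])

theorem mainTheorem7:
  fixes H :: "complex^'n^'n" and \<G> :: "(complex^'n^'n) set" and \<psi> :: "complex^'n"
  assumes "hermitian H"
    and "norm \<psi> = 1" and "\<psi> \<in> gs H"
    and "finite \<G>" and "mat 1 \<in> \<G>"
    and "\<forall>A\<in>\<G>. \<forall>B\<in>\<G>. A ** B \<in> \<G>"
    and "\<forall>A\<in>\<G>. adj A \<in> \<G>"
    and "\<forall>U\<in>\<G>. unitary_op U"
    and "\<forall>U\<in>\<G>. U *v \<psi> = \<psi>"
  shows "gs ((1 / real (card \<G>)) *\<^sub>R (\<Sum>U\<in>\<G>. adj U ** H ** U)) \<subseteq> gs H"
proof
  define N where "N = real (card \<G>)"
  define Hb where "Hb = (1 / real (card \<G>)) *\<^sub>R (\<Sum>U\<in>\<G>. adj U ** H ** U)"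
  define E0 where "E0 = ground_energy H"
  have fin: "finite \<G>" by fact
  have Npos: "N > 0" unfolding N_def using assms(4,5) card_gt_0_iff by force
  have saH: "sa H" using assms(1) by (rule hermitian_sa)
  have Hbnd: "E0 * (x \<bullet> x) \<le> x \<bullet> (H *v x)" for x
    using ground_props(1)[OF saH] unfolding E0_def by blast
  have Hpsi: "H *v \<psi> = E0 *\<^sub>R \<psi>"
    using assms(3) unfolding gs_def E0_def by (simp add: ofreal_smult)
  have Hbv: "Hb *v x = (1/N) *\<^sub>R (\<Sum>U\<in>\<G>. adj U *v (H *v (U *v x)))" for x
    unfolding Hb_def N_def by (simp add: mv_scale mv_sum[OF fin] matrix_vector_mul_assoc matrix_mul_assoc)
  have form: "x \<bullet> (Hb *v y) = (1/N) * (\<Sum>U\<in>\<G>. (U *v x) \<bullet> (H *v (U *v y)))" for x y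
    unfolding Hbv by (simp add: inner_sum_right adj_inner2)
  have saHb: "sa Hb"
    unfolding sa_def
  proof (intro allI)
    fix x y
    have "(Hb *v x) \<bullet> y = y \<bullet> (Hb *v x)" by (rule inner_commute)
    also have "\<dots> = (1/N) * (\<Sum>U\<in>\<G>. (U *v y) \<bullet> (H *v (U *v x)))" by (rule form)
    also have "\<dots> = (1/N) * (\<Sum>U\<in>\<G>. (U *v x) \<bullet> (H *v (U *v y)))"
      using saH unfolding sa_def by (simp add: inner_commute)
    also have "\<dots> = x \<bullet> (Hb *v y)" by (rule form[symmetric])
    finally show "x \<bullet> (Hb *v y) = (Hb *v x) \<bullet> y" by simp
  qed
  have unit: "(U *v x) \<bullet> (U *v x) = x \<bullet> x" if "U \<in> \<G>" for U x
  proof -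
    have "(U *v x) \<bullet> (U *v x) = x \<bullet> (adj U *v (U *v x))" by (rule adj_inner')
    also have "\<dots> = x \<bullet> x" using assms(8) that unfolding unitary_op_def
      by (simp add: matrix_vector_mul_assoc)
    finally show ?thesis .
  qed
  have Hbpsi: "Hb *v \<psi> = complex_of_real E0 *s \<psi>"
  proof -
    have "Hb *v \<psi> = (1/N) *\<^sub>R (\<Sum>U\<in>\<G>. E0 *\<^sub>R \<psi>)"
      unfolding Hbv
    proof (intro arg_cong[where f="\<lambda>z. (1/N) *\<^sub>R z"] sum.cong refl)
      fix U assume U: "U \<in> \<G>"
      have "adj U \<in> \<G>" using assms(7) U by blast
      then show "adj U *v (H *v (U *v \<psi>)) = E0 *\<^sub>R \<psi>"
        using assms(9) U Hpsi by (simp add: mv_scaleR)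
    qed
    also have "\<dots> = (1/N) *\<^sub>R ((\<Sum>U\<in>\<G>. E0) *\<^sub>R \<psi>)" by (simp only: scaleR_sum_left)
    also have "\<dots> = E0 *\<^sub>R \<psi>" using Npos unfolding N_def by simp
    finally show ?thesis by (simp add: ofreal_smult)
  qed
  have psi0: "\<psi> \<noteq> 0" using assms(2) by auto
  have Hbbnd: "\<forall>x. E0 * (x \<bullet> x) \<le> x \<bullet> (Hb *v x)"
  proof
    fix x
    have "E0 * (x \<bullet> x) = (1/N) * (\<Sum>U\<in>\<G>. E0 * ((U *v x) \<bullet> (U *v x)))"
      using unit Npos unfolding N_def by simp
    also have "\<dots> \<le> (1/N) * (\<Sum>U\<in>\<G>. (U *v x) \<bullet> (H *v (U *v x)))"
      using Npos Hbnd by (intro mult_left_mono sum_mono) auto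
    also have "\<dots> = x \<bullet> (Hb *v x)" by (rule form[symmetric])
    finally show "E0 * (x \<bullet> x) \<le> x \<bullet> (Hb *v x)" .
  qed
  have gHb: "ground_energy Hb = E0" using ground_char[OF saHb Hbpsi psi0 Hbbnd] .
  fix v assume "v \<in> gs ((1 / real (card \<G>)) *\<^sub>R (\<Sum>U\<in>\<G>. adj U ** H ** U))"
  then have vHb: "Hb *v v = complex_of_real E0 *s v" unfolding gs_def Hb_def[symmetric] gHb by simp
  have "(1/N) * (\<Sum>U\<in>\<G>. (U *v v) \<bullet> (H *v (U *v v))) = E0 * (v \<bullet> v)"
    using form[of v v] vHb by (simp add: inner_smult_right)
  also have "\<dots> = (1/N) * (\<Sum>U\<in>\<G>. E0 * ((U *v v) \<bullet> (U *v v)))"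
    using unit Npos unfolding N_def by simp
  finally have "(\<Sum>U\<in>\<G>. (U *v v) \<bullet> (H *v (U *v v))) = (\<Sum>U\<in>\<G>. E0 * ((U *v v) \<bullet> (U *v v)))"
    using Npos by simp
  define g where "g U = (U *v v) \<bullet> (H *v (U *v v)) - E0 * ((U *v v) \<bullet> (U *v v))" for U
  then have g0: "sum g \<G> = 0"
    using \<open>(\<Sum>U\<in>\<G>. _) = _\<close> by (simp add: sum_subtractf)
  have gnn: "\<forall>U\<in>\<G>. 0 \<le> g U"
    using Hbnd unfolding g_def by simp
  have "g (mat 1) = 0" using sum_nonneg_eq_0_iff[OF fin, of g] g0 gnn assms(5) by blast
  then have "v \<bullet> (H *v v) = E0 * (v \<bullet> v)" unfolding g_def by simp
  then have "H *v v = complex_of_real E0 *s v" using psd_eig[OF saH] Hbnd by blast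
  then show "v \<in> gs H" unfolding gs_def E0_def by simp
qed

end
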